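(* Let $X\in\mathbb{R}^{n\times r}$ have linearly independent columns and let $A\in\mathbb{R}^{r\times r}$ be skewsymmetric. Then $\det(A+X^\top X)>0$. Moreover, the function on subsets $\mathtt{C}\subseteq\{1,\dots,n\}$ given by $$p(\mathtt{C})=\frac{1}{\det(A+X^\top X)}\det\begin{bmatrix}0_{|\mathtt{C}|}&X_{\mathtt{C}:}\\-(X_{\mathtt{C}:})^\top&A\end{bmatrix}$$ is a probability mass function on the subsets of $\{1,\dots,n\}$. That is, $p(\mathtt{C})\ge0$ for all $\mathtt{C}$ and $\sum_{\mathtt{C}}p(\mathtt{C})=1$. For $\mathtt{C}=\emptyset$ the matrix is understood as $A$.
   Context: $X_{\mathtt{C}:}$ is the submatrix of $X$ with rows indexed by $\mathtt{C}$ in increasing order. $0_m$ is the $m\times m$ zero matrix. *)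

theory Defs
  imports "Jordan_Normal_Form.Determinant" "Jordan_Normal_Form.DL_Submatrix"
begin

definition rows_sub :: "real mat \<Rightarrow> nat set \<Rightarrow> real mat" where
  "rows_sub X C = submatrix X C {0..<dim_col X}"

definition block_C :: "real mat \<Rightarrow> real mat \<Rightarrow> nat set \<Rightarrow> real mat" where
  "block_C X A C = (let Y = rows_sub X C in
     four_block_mat (0\<^sub>m (dim_row Y) (dim_row Y)) Y (- transpose_mat Y) A)"

definition pC :: "real mat \<Rightarrow> real mat \<Rightarrow> nat set \<Rightarrow> real" where
  "pC X A C = det (block_C X A C) / det (A + transpose_mat X * X)"

end

theory Submission
  imports Defs "Jordan_Normal_Form.Char_Poly"
begin


lemma skew_quad_zero:
  fixes K :: "real mat"
  assumes K: "K \<in> carrier_mat m m" and sk: "transpose_mat K = - K" and v: "v \<in> carrier_vec m"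
  shows "v \<bullet> (K *\<^sub>v v) = 0"
proof -
  have "(transpose_mat K *\<^sub>v v) \<bullet> v = v \<bullet> (K *\<^sub>v v)"
    by (rule transpose_vec_mult_scalar[OF K v v])
  moreover have "transpose_mat K *\<^sub>v v = - (K *\<^sub>v v)"
    using sk K v by (simp add: uminus_mult_mat_vec)
  moreover have "(- (K *\<^sub>v v)) \<bullet> v = - ((K *\<^sub>v v) \<bullet> v)"
    using K v by (simp)
  moreover have "(K *\<^sub>v v) \<bullet> v = v \<bullet> (K *\<^sub>v v)"
    using K v by (metis comm_scalar_prod mult_mat_vec_carrier)
  ultimately have "v \<bullet> (K *\<^sub>v v) = - (v \<bullet> (K *\<^sub>v v))" by metis
  thus ?thesis by simp
qed

lemma self_scalar_pos:
  fixes v :: "real vec"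
  assumes v: "v \<in> carrier_vec m" and nz: "v \<noteq> 0\<^sub>v m"
  shows "v \<bullet> v > 0"
proof -
  have eq: "v \<bullet> v = (\<Sum>i\<in>{0..<m}. v $ i * v $ i)" using v by (simp add: scalar_prod_def)
  obtain i where i: "i < m" "v $ i \<noteq> 0" using nz v by (metis eq_vecI carrier_vecD index_zero_vec(1,2))
  have "0 < v $ i * v $ i" using i by (auto simp: zero_less_mult_iff)
  also have "\<dots> \<le> (\<Sum>i\<in>{0..<m}. v $ i * v $ i)"
    by (rule member_le_sum) (use i in auto)
  finally show ?thesis using eq by simp
qed

lemma skew_no_nonzero_eig:
  fixes K :: "real mat"
  assumes K: "K \<in> carrier_mat m m" and sk: "transpose_mat K = - K" and t: "t \<noteq> 0"
  shows "poly (char_poly K) t \<noteq> 0"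
proof
  assume "poly (char_poly K) t = 0"
  hence "eigenvalue K t" using eigenvalue_root_char_poly[OF K] by simp
  then obtain v where ev: "eigenvector K v t" unfolding eigenvalue_def by auto
  hence v: "v \<in> carrier_vec m" "v \<noteq> 0\<^sub>v m" "K *\<^sub>v v = t \<cdot>\<^sub>v v" using K unfolding eigenvector_def by auto
  have "0 = v \<bullet> (K *\<^sub>v v)" using skew_quad_zero[OF K sk v(1)] by simp
  also have "\<dots> = t * (v \<bullet> v)" using v by simp
  finally show False using self_scalar_pos[OF v(1,2)] t by simp
qed

lemma skew_det_neg_nonneg:
  fixes K :: "real mat"
  assumes K: "K \<in> carrier_mat m m" and sk: "transpose_mat K = - K"
  shows "det (- K) \<ge> 0"
proof (rule ccontr)
  assume neg: "\<not> det (- K) \<ge> 0"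
  let ?p = "char_poly K"
  have dm: "degree ?p = m" "coeff ?p m = 1" using degree_monic_char_poly[OF K] by auto
  hence lc: "lead_coeff ?p = 1" by simp
  obtain b where b: "\<forall>x\<ge>b. poly ?p x \<ge> lead_coeff ?p" using poly_pinfty_gt_lc[of ?p] lc by auto
  define b' where "b' = max b 1"
  have "poly ?p b' \<ge> 1" using b lc unfolding b'_def by (metis max.cobounded1)
  hence pb: "poly ?p b' > 0" by simp
  have "poly ?p 0 = det (- (char_matrix K 0))" by (rule char_poly_matrix[OF K])
  also have "char_matrix K 0 = K" using K unfolding char_matrix_def by auto
  finally have "poly ?p 0 < 0" using neg by simp
  then obtain x where x: "0 < x" "x < b'" "poly ?p x = 0" using poly_IVT_pos[of 0 b' ?p] pb b'_def by fastforce
  thus False using skew_no_nonzero_eig[OF K sk, of x] by simp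
qed

lemma skew_det_nonneg:
  fixes K :: "real mat"
  assumes K: "K \<in> carrier_mat m m" and sk: "transpose_mat K = - K"
  shows "det K \<ge> 0"
proof -
  have K': "- K \<in> carrier_mat m m" using K by simp
  have "transpose_mat (- K) = - (- K)" using sk by (simp add: transpose_uminus)
  from skew_det_neg_nonneg[OF K' this] show ?thesis using K by simp
qed



lemma det_psd_nonzero:
  fixes X A :: "real mat"
  assumes X: "X \<in> carrier_mat n r" and A: "A \<in> carrier_mat r r"
    and sk: "transpose_mat A = - A"
    and inj: "\<forall>v \<in> carrier_vec r. X *\<^sub>v v = 0\<^sub>v n \<longrightarrow> v = 0\<^sub>v r"
  shows "det (A + transpose_mat X * X) \<noteq> 0"
proof
  have G: "A + transpose_mat X * X \<in> carrier_mat r r" using X A by auto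
  assume "det (A + transpose_mat X * X) = 0"
  then obtain v where v: "v \<in> carrier_vec r" "v \<noteq> 0\<^sub>v r" "(A + transpose_mat X * X) *\<^sub>v v = 0\<^sub>v r"
    using det_0_iff_vec_prod_zero[OF G] by auto
  have Xv: "X *\<^sub>v v \<in> carrier_vec n" using X v by simp
  have "(A + transpose_mat X * X) *\<^sub>v v = A *\<^sub>v v + transpose_mat X *\<^sub>v (X *\<^sub>v v)"
    using X A v by (simp add: add_mult_distrib_mat_vec assoc_mult_mat_vec)
  hence "A *\<^sub>v v + transpose_mat X *\<^sub>v (X *\<^sub>v v) = 0\<^sub>v r" using v(3) by simp
  hence "0 = v \<bullet> (A *\<^sub>v v + transpose_mat X *\<^sub>v (X *\<^sub>v v))" using v by simp
  also have "\<dots> = v \<bullet> (A *\<^sub>v v) + v \<bullet> (transpose_mat X *\<^sub>v (X *\<^sub>v v))"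
    using X A v by (simp add: scalar_prod_add_distrib[of _ r])
  also have "v \<bullet> (A *\<^sub>v v) = 0" by (rule skew_quad_zero[OF A sk v(1)])
  also have "v \<bullet> (transpose_mat X *\<^sub>v (X *\<^sub>v v)) = (transpose_mat X *\<^sub>v (X *\<^sub>v v)) \<bullet> v"
    using X v by (metis comm_scalar_prod mult_mat_vec_carrier transpose_carrier_mat Xv)
  also have "\<dots> = (X *\<^sub>v v) \<bullet> (X *\<^sub>v v)" by (rule transpose_vec_mult_scalar[OF X v(1) Xv])
  finally have "(X *\<^sub>v v) \<bullet> (X *\<^sub>v v) = 0" by simp
  hence "X *\<^sub>v v = 0\<^sub>v n" using self_scalar_pos[OF Xv] by force
  thus False using inj v by auto
qed

lemma schur_det:
  fixes X A :: "real mat"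
  assumes X: "X \<in> carrier_mat n r" and A: "A \<in> carrier_mat r r"
  shows "det (four_block_mat (1\<^sub>m n) X (- transpose_mat X) A) = det (A + transpose_mat X * X)"
proof -
  have XT: "transpose_mat X \<in> carrier_mat r n" using X by simp
  have "four_block_mat (1\<^sub>m n) (0\<^sub>m n r) (- transpose_mat X) (1\<^sub>m r) *
        four_block_mat (1\<^sub>m n) X (0\<^sub>m r n) (A + transpose_mat X * X)
      = four_block_mat (1\<^sub>m n * 1\<^sub>m n + 0\<^sub>m n r * 0\<^sub>m r n) (1\<^sub>m n * X + 0\<^sub>m n r * (A + transpose_mat X * X))
          (- transpose_mat X * 1\<^sub>m n + 1\<^sub>m r * 0\<^sub>m r n) (- transpose_mat X * X + 1\<^sub>m r * (A + transpose_mat X * X))"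
    by (rule mult_four_block_mat) (use X A in auto)
  also have "\<dots> = four_block_mat (1\<^sub>m n) X (- transpose_mat X) A"
  proof -
    have "- transpose_mat X * X + 1\<^sub>m r * (A + transpose_mat X * X) = A"
    proof -
      have "- transpose_mat X * X = - (transpose_mat X * X)" using X by simp
      moreover have "1\<^sub>m r * (A + transpose_mat X * X) = A + transpose_mat X * X" using X A by simp
      ultimately show ?thesis using X A
        by (intro eq_matI) auto
    qed
    thus ?thesis using X A by simp
  qed
  finally have eq: "four_block_mat (1\<^sub>m n) X (- transpose_mat X) A =
    four_block_mat (1\<^sub>m n) (0\<^sub>m n r) (- transpose_mat X) (1\<^sub>m r) *
        four_block_mat (1\<^sub>m n) X (0\<^sub>m r n) (A + transpose_mat X * X)" by simp
  have "det (four_block_mat (1\<^sub>m n) (0\<^sub>m n r) (- transpose_mat X) (1\<^sub>m r)) = 1"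
    by (subst det_four_block_mat_upper_right_zero[of _ n _ r]) (use X in auto)
  moreover have "det (four_block_mat (1\<^sub>m n) X (0\<^sub>m r n) (A + transpose_mat X * X)) = det (A + transpose_mat X * X)"
    by (subst det_four_block_mat_lower_left_zero[of _ n _ r]) (use X A in auto)
  ultimately show ?thesis unfolding eq
    by (subst det_mult[of _ "n+r"]) (use X A in auto)
qed



definition minor_on :: "'a::comm_ring_1 mat \<Rightarrow> nat set \<Rightarrow> 'a" where
  "minor_on M S = (\<Sum>p \<in> {p. p permutes S}. signof p * (\<Prod>i\<in>S. M $$ (i, p i)))"

lemma permutes_fix_iff:
  assumes "B \<subseteq> S"
  shows "(p permutes S \<and> (\<forall>i\<in>B. p i = i)) \<longleftrightarrow> p permutes (S - B)"
  using assms unfolding permutes_def by blast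

lemma prod_if_fix:
  fixes d :: "nat \<Rightarrow> 'a::comm_ring_1"
  assumes "finite B"
  shows "(\<Prod>i\<in>B. if i = p i then d i else 0) = (if (\<forall>i\<in>B. p i = i) then (\<Prod>i\<in>B. d i) else 0)"
proof (cases "\<forall>i\<in>B. p i = i")
  case True thus ?thesis by (auto intro: prod.cong)
next
  case False
  then obtain i where i: "i \<in> B" "p i \<noteq> i" by auto
  have "\<exists>a\<in>B. (if a = p a then d a else 0) = 0" using i by (intro bexI[of _ i]) auto
  hence "(\<Prod>i\<in>B. if i = p i then d i else 0) = 0" using assms by (rule prod_zero[rotated])
  thus ?thesis using False by auto
qed

lemma det_diag_add:
  fixes M E :: "'a::comm_ring_1 mat"
  assumes M: "M \<in> carrier_mat N N" and E: "E \<in> carrier_mat N N"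
    and ent: "\<And>i j. i < N \<Longrightarrow> j < N \<Longrightarrow> E $$ (i,j) = (if i = j then d i else 0) + M $$ (i,j)"
  shows "det E = (\<Sum>B \<in> Pow {0..<N}. (\<Prod>i\<in>B. d i) * minor_on M ({0..<N} - B))"
proof -
  let ?P = "{p. p permutes {0..<N}}"
  have "det E = (\<Sum>p \<in> ?P. signof p * (\<Prod>i\<in>{0..<N}. E $$ (i, p i)))"
    by (rule det_def'[OF E])
  also have "\<dots> = (\<Sum>p \<in> ?P. \<Sum>B \<in> Pow {0..<N}. signof p * ((if (\<forall>i\<in>B. p i = i) then (\<Prod>i\<in>B. d i) else 0)
        * (\<Prod>i\<in>{0..<N} - B. M $$ (i, p i))))"
  proof (rule sum.cong[OF refl])
    fix p assume "p \<in> ?P"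
    hence p: "p permutes {0..<N}" by simp
    have "(\<Prod>i\<in>{0..<N}. E $$ (i, p i)) = (\<Prod>i\<in>{0..<N}. (if i = p i then d i else 0) + M $$ (i, p i))"
      by (rule prod.cong[OF refl]) (use p ent permutes_in_image[OF p] in auto)
    also have "\<dots> = (\<Sum>B \<in> Pow {0..<N}. (\<Prod>i\<in>B. if i = p i then d i else 0) * (\<Prod>i\<in>{0..<N} - B. M $$ (i, p i)))"
      by (rule prod_add) simp
    also have "\<dots> = (\<Sum>B \<in> Pow {0..<N}. (if (\<forall>i\<in>B. p i = i) then (\<Prod>i\<in>B. d i) else 0) * (\<Prod>i\<in>{0..<N} - B. M $$ (i, p i)))"
      by (rule sum.cong[OF refl]) (subst prod_if_fix, auto intro: finite_subset)
    finally show "signof p * (\<Prod>i\<in>{0..<N}. E $$ (i, p i)) = (\<Sum>B \<in> Pow {0..<N}. signof p * ((if (\<forall>i\<in>B. p i = i) then (\<Prod>i\<in>B. d i) else 0)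
        * (\<Prod>i\<in>{0..<N} - B. M $$ (i, p i))))"
      by (simp add: sum_distrib_left)
  qed
  also have "\<dots> = (\<Sum>B \<in> Pow {0..<N}. \<Sum>p \<in> ?P. signof p * ((if (\<forall>i\<in>B. p i = i) then (\<Prod>i\<in>B. d i) else 0)
        * (\<Prod>i\<in>{0..<N} - B. M $$ (i, p i))))"
    by (rule sum.swap)
  also have "\<dots> = (\<Sum>B \<in> Pow {0..<N}. (\<Prod>i\<in>B. d i) * minor_on M ({0..<N} - B))"
  proof (rule sum.cong[OF refl])
    fix B assume "B \<in> Pow {0..<N}"
    hence B: "B \<subseteq> {0..<N}" by simp
    have finP: "finite ?P" by (rule finite_permutations) simp
    have "(\<Sum>p \<in> ?P. signof p * ((if (\<forall>i\<in>B. p i = i) then (\<Prod>i\<in>B. d i) else 0)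
        * (\<Prod>i\<in>{0..<N} - B. M $$ (i, p i))))
       = (\<Sum>p \<in> ?P. if (\<forall>i\<in>B. p i = i) then (\<Prod>i\<in>B. d i) * (signof p * (\<Prod>i\<in>{0..<N} - B. M $$ (i, p i))) else 0)"
      by (rule sum.cong[OF refl]) auto
    also have "\<dots> = (\<Sum>p \<in> {p \<in> ?P. \<forall>i\<in>B. p i = i}. (\<Prod>i\<in>B. d i) * (signof p * (\<Prod>i\<in>{0..<N} - B. M $$ (i, p i))))"
      by (rule sum.inter_filter[symmetric, OF finP])
    also have "{p \<in> ?P. \<forall>i\<in>B. p i = i} = {p. p permutes ({0..<N} - B)}"
      using permutes_fix_iff[OF B] by auto
    finally show "(\<Sum>p \<in> ?P. signof p * ((if (\<forall>i\<in>B. p i = i) then (\<Prod>i\<in>B. d i) else 0)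
        * (\<Prod>i\<in>{0..<N} - B. M $$ (i, p i)))) = (\<Prod>i\<in>B. d i) * minor_on M ({0..<N} - B)"
      unfolding minor_on_def by (simp add: sum_distrib_left)
  qed
  finally show ?thesis .
qed

lemma det_reindex_minor:
  fixes B M :: "'a::comm_ring_1 mat"
  assumes B: "B \<in> carrier_mat k k" and g: "bij_betw g {0..<k} S"
    and ent: "\<And>i j. i < k \<Longrightarrow> j < k \<Longrightarrow> B $$ (i,j) = M $$ (g i, g j)"
  shows "det B = minor_on M S"
proof -
  let ?Q = "{q. q permutes {0..<k}}"
  let ?PS = "{p. p permutes S}"
  define g' where "g' = inv_into {0..<k} g"
  have injg: "inj_on g {0..<k}" using g by (simp add: bij_betw_def)
  have g': "bij_betw g' S {0..<k}" unfolding g'_def by (rule bij_betw_inv_into[OF g])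
  have g'g: "\<And>x. x \<in> {0..<k} \<Longrightarrow> g' (g x) = x" unfolding g'_def using injg by (simp add: inv_into_f_f)
  have gg': "\<And>x. x \<in> S \<Longrightarrow> g (g' x) = x" unfolding g'_def using g by (simp add: bij_betw_def f_inv_into_f)
  have "det B = (\<Sum>q \<in> ?Q. signof q * (\<Prod>i\<in>{0..<k}. B $$ (i, q i)))"
    by (rule det_def'[OF B])
  also have "\<dots> = (\<Sum>q \<in> ?Q. signof q * (\<Prod>i\<in>{0..<k}. M $$ (g i, g (q i))))"
  proof (rule sum.cong[OF refl])
    fix q assume "q \<in> ?Q"
    hence q: "q permutes {0..<k}" by simp
    show "signof q * (\<Prod>i\<in>{0..<k}. B $$ (i, q i)) = signof q * (\<Prod>i\<in>{0..<k}. M $$ (g i, g (q i)))"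
      by (rule arg_cong[where f = "\<lambda>x. signof q * x"], rule prod.cong[OF refl])
        (use ent permutes_in_image[OF q] in auto)
  qed
  also have "\<dots> = (\<Sum>p \<in> ?PS. signof p * (\<Prod>i\<in>S. M $$ (i, p i)))"
  proof (rule sum.reindex_bij_witness[where j = "map_permutation {0..<k} g" and i = "map_permutation S g'"])
    fix q assume "q \<in> ?Q"
    hence q: "q permutes {0..<k}" by simp
    show "map_permutation S g' (map_permutation {0..<k} g q) = q"
      by (rule map_permutation_compose_inv[OF g q g'g])
    show "map_permutation {0..<k} g q \<in> ?PS"
      using map_permutation_permutes[OF g q] by simp
    have sg: "sign (map_permutation {0..<k} g q) = sign q"
      by (rule sign_map_permutation[OF injg q]) simp
    have "(\<Prod>i\<in>S. M $$ (i, map_permutation {0..<k} g q i))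
        = (\<Prod>x\<in>{0..<k}. M $$ (g x, map_permutation {0..<k} g q (g x)))"
      by (rule prod.reindex_bij_betw[symmetric, OF g])
    also have "\<dots> = (\<Prod>x\<in>{0..<k}. M $$ (g x, g (q x)))"
      by (rule prod.cong[OF refl]) (simp add: map_permutation_apply[OF injg])
    finally show "signof (map_permutation {0..<k} g q) * (\<Prod>i\<in>S. M $$ (i, map_permutation {0..<k} g q i))
        = signof q * (\<Prod>i\<in>{0..<k}. M $$ (g i, g (q i)))" using sg by simp
  next
    fix p assume "p \<in> ?PS"
    hence p: "p permutes S" by simp
    show "map_permutation {0..<k} g (map_permutation S g' p) = p"
      by (rule map_permutation_compose_inv[OF g' p gg'])
    show "map_permutation S g' p \<in> ?Q"
      using map_permutation_permutes[OF g' p] by simp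
  qed
  finally show ?thesis unfolding minor_on_def .
qed



lemma pick_atLeast0: "j < r \<Longrightarrow> pick {0..<r} j = j"
proof -
  assume j: "j < r"
  have e: "{a. a < r \<and> a \<in> UNIV} = {0..<r}" by auto
  have "pick UNIV j = pick {a. a < r \<and> a \<in> UNIV} j"
    by (rule pick_reduce_set) (use j e in simp)
  thus ?thesis using e pick_UNIV by simp
qed

lemma card_less_in:
  fixes C :: "nat set"
  assumes "finite C" "x \<in> C" shows "card {a\<in>C. a < x} < card C"
proof -
  have "x \<notin> {a\<in>C. a < x}" by simp
  hence "{a\<in>C. a < x} \<noteq> C" using assms(2) by blast
  hence "{a\<in>C. a < x} \<subset> C" by blast
  thus ?thesis using assms by (simp add: psubset_card_mono)
qed

lemma block_minor:
  fixes X A :: "real mat"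
  assumes X: "X \<in> carrier_mat n r" and A: "A \<in> carrier_mat r r" and C: "C \<subseteq> {0..<n}"
  shows "det (block_C X A C) = minor_on (four_block_mat (0\<^sub>m n n) X (- transpose_mat X) A) (C \<union> {n..<n+r})"
proof -
  define k where "k = card C"
  define M where "M = four_block_mat (0\<^sub>m n n) X (- transpose_mat X) A"
  define Y where "Y = rows_sub X C"
  have finC: "finite C" using C finite_subset by blast
  have eC: "{i. i < n \<and> i \<in> C} = C" using C by auto
  have eR: "{j. j < r \<and> j \<in> {0..<r}} = {0..<r}" by auto
  have dY: "dim_row Y = k" "dim_col Y = r"
    unfolding Y_def rows_sub_def k_def using X by (simp_all add: dim_submatrix eC eR)
  have Y: "Y \<in> carrier_mat k r" using dY by auto
  have Yij: "Y $$ (i,j) = X $$ (pick C i, j)" if "i < k" "j < r" for i j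
    unfolding Y_def rows_sub_def using that X
    by (subst submatrix_index) (simp_all add: eC eR k_def pick_atLeast0)
  have pickC: "pick C i \<in> C" "pick C i < n" if "i < k" for i
    using pick_in_set[of i C] that C unfolding k_def by auto
  have bc: "block_C X A C = four_block_mat (0\<^sub>m k k) Y (- transpose_mat Y) A"
    unfolding block_C_def Y_def[symmetric] Let_def dY by simp
  have Bc: "block_C X A C \<in> carrier_mat (k + r) (k + r)" unfolding bc using Y A by auto
  define g where "g i = (if i < k then pick C i else n + (i - k))" for i
  define h where "h x = (if x < n then card {a\<in>C. a < x} else k + (x - n))" for x
  have bij: "bij_betw g {0..<k+r} (C \<union> {n..<n+r})"
  proof (rule bij_betw_byWitness[where f' = h])
    show "\<forall>a\<in>{0..<k + r}. h (g a) = a"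
      using pickC card_pick[of _ C] unfolding g_def h_def k_def by auto
    show "\<forall>a'\<in>C \<union> {n..<n + r}. g (h a') = a'"
      using C card_less_in[OF finC] pick_card_in_set[of _ C] unfolding g_def h_def k_def by auto
    show "g ` {0..<k + r} \<subseteq> C \<union> {n..<n + r}"
      using pickC unfolding g_def by auto
    show "h ` (C \<union> {n..<n + r}) \<subseteq> {0..<k + r}"
    proof -
      have ck: "\<And>x. x\<in>C \<Longrightarrow> card {a\<in>C. a<x} < k + r"
        using card_less_in[OF finC] unfolding k_def by (meson trans_less_add1)
      show ?thesis using ck C unfolding h_def by auto
    qed
  qed
  have ent: "block_C X A C $$ (i,j) = M $$ (g i, g j)" if "i < k + r" "j < k + r" for i j
  proof -
    have pr: "\<And>i. i < k \<Longrightarrow> pick C i < n + r" using pickC(2) by (meson trans_less_add1)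
    have gi: "g i < n + r" "g j < n + r" using that pr unfolding g_def by auto
    have lhs: "block_C X A C $$ (i,j) = (if i < k then if j < k then 0 else Y $$ (i, j - k)
      else if j < k then - Y $$ (j, i - k) else A $$ (i - k, j - k))"
      unfolding bc using that Y A by auto
    have rhs: "M $$ (g i, g j) = (if g i < n then if g j < n then 0 else X $$ (g i, g j - n)
      else if g j < n then - X $$ (g j, g i - n) else A $$ (g i - n, g j - n))"
      unfolding M_def using gi X A by auto
    show ?thesis unfolding lhs rhs using that pickC Yij unfolding g_def by auto
  qed
  show ?thesis unfolding M_def[symmetric]
    by (rule det_reindex_minor[OF Bc bij ent])
qed



lemma block_C_props:
  fixes X A :: "real mat"
  assumes X: "X \<in> carrier_mat n r" and A: "A \<in> carrier_mat r r" and C: "C \<subseteq> {0..<n}"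
    and sk: "transpose_mat A = - A"
  shows "block_C X A C \<in> carrier_mat (card C + r) (card C + r)"
    "transpose_mat (block_C X A C) = - block_C X A C"
proof -
  define k where "k = card C"
  define Y where "Y = rows_sub X C"
  have eC: "{i. i < n \<and> i \<in> C} = C" using C by auto
  have eR: "{j. j < r \<and> j \<in> {0..<r}} = {0..<r}" by auto
  have dY: "dim_row Y = k" "dim_col Y = r"
    unfolding Y_def rows_sub_def k_def using X by (simp_all add: dim_submatrix eC eR)
  have Y: "Y \<in> carrier_mat k r" using dY by auto
  have bc: "block_C X A C = four_block_mat (0\<^sub>m k k) Y (- transpose_mat Y) A"
    unfolding block_C_def Y_def[symmetric] Let_def dY by simp
  show Bc: "block_C X A C \<in> carrier_mat (card C + r) (card C + r)" unfolding bc k_def[symmetric] using Y A by auto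
  have Aij: "A $$ (j, i) = - A $$ (i, j)" if "i < r" "j < r" for i j
  proof -
    have "transpose_mat A $$ (i, j) = (- A) $$ (i, j)" using sk by simp
    thus ?thesis using that A by simp
  qed
  show "transpose_mat (block_C X A C) = - block_C X A C"
  proof (rule eq_matI)
    fix i j assume ij: "i < dim_row (- block_C X A C)" "j < dim_col (- block_C X A C)"
    hence ij': "i < k + r" "j < k + r" using Bc unfolding k_def by auto
    have "transpose_mat (block_C X A C) $$ (i, j) = block_C X A C $$ (j, i)" using ij' Bc k_def by simp
    also have "\<dots> = four_block_mat (0\<^sub>m k k) Y (- transpose_mat Y) A $$ (j, i)" unfolding bc ..
    also have "\<dots> = (if j < k then if i < k then 0 else Y $$ (j, i - k)
      else if i < k then - Y $$ (i, j - k) else A $$ (j - k, i - k))"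
      using ij' Y A by simp
    also have "\<dots> = - (if i < k then if j < k then 0 else Y $$ (i, j - k)
      else if j < k then - Y $$ (j, i - k) else A $$ (i - k, j - k))"
      using ij' by (auto simp: Aij[of "i - k" "j - k"])
    also have "\<dots> = - (four_block_mat (0\<^sub>m k k) Y (- transpose_mat Y) A $$ (i, j))"
      using ij' Y A by simp
    also have "\<dots> = (- block_C X A C) $$ (i, j)"
      unfolding bc using ij' Y A by simp
    finally show "transpose_mat (block_C X A C) $$ (i, j) = (- block_C X A C) $$ (i, j)" .
  qed (use Bc in auto)
qed

lemma sum_identity:
  fixes X A :: "real mat"
  assumes X: "X \<in> carrier_mat n r" and A: "A \<in> carrier_mat r r"
  shows "det (A + transpose_mat X * X) = (\<Sum>C \<in> Pow {0..<n}. det (block_C X A C))"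
proof -
  define M where "M = four_block_mat (0\<^sub>m n n) X (- transpose_mat X) A"
  define E where "E = four_block_mat (1\<^sub>m n) X (- transpose_mat X) A"
  define d where "d i = (if i < n then 1 else (0::real))" for i
  have Mc: "M \<in> carrier_mat (n + r) (n + r)" unfolding M_def using X A by auto
  have Ec: "E \<in> carrier_mat (n + r) (n + r)" unfolding E_def using X A by auto
  have ent: "E $$ (i,j) = (if i = j then d i else 0) + M $$ (i,j)" if "i < n + r" "j < n + r" for i j
    unfolding E_def M_def d_def using that X A by auto
  have "det (A + transpose_mat X * X) = det E" unfolding E_def by (rule schur_det[OF X A, symmetric])
  also have "\<dots> = (\<Sum>B \<in> Pow {0..<n+r}. (\<Prod>i\<in>B. d i) * minor_on M ({0..<n+r} - B))"
    by (rule det_diag_add[OF Mc Ec ent])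
  also have "\<dots> = (\<Sum>B \<in> Pow {0..<n}. (\<Prod>i\<in>B. d i) * minor_on M ({0..<n+r} - B))"
  proof (rule sum.mono_neutral_right)
    show "Pow {0..<n} \<subseteq> Pow {0..<n + r}" by auto
    show "\<forall>B\<in>Pow {0..<n + r} - Pow {0..<n}. (\<Prod>i\<in>B. d i) * minor_on M ({0..<n + r} - B) = 0"
    proof
      fix B assume B: "B \<in> Pow {0..<n + r} - Pow {0..<n}"
      hence "\<not> B \<subseteq> {0..<n}" by simp
      then obtain i where i: "i \<in> B" "\<not> i < n" by (auto simp: subset_iff)
      have fB: "finite B" using B finite_subset by auto
      have "(\<Prod>i\<in>B. d i) = 0" using i fB unfolding d_def by (intro prod_zero) auto
      thus "(\<Prod>i\<in>B. d i) * minor_on M ({0..<n + r} - B) = 0" by simp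
    qed
  qed simp
  also have "\<dots> = (\<Sum>B \<in> Pow {0..<n}. minor_on M ({0..<n+r} - B))"
  proof (rule sum.cong[OF refl])
    fix B assume "B \<in> Pow {0..<n}"
    hence "(\<Prod>i\<in>B. d i) = 1" unfolding d_def by (intro prod.neutral) auto
    thus "(\<Prod>i\<in>B. d i) * minor_on M ({0..<n + r} - B) = minor_on M ({0..<n+r} - B)" by simp
  qed
  also have "\<dots> = (\<Sum>C \<in> Pow {0..<n}. minor_on M (C \<union> {n..<n+r}))"
  proof (rule sum.reindex_bij_witness[where i = "\<lambda>C. {0..<n} - C" and j = "\<lambda>C. {0..<n} - C"])
    fix C assume "C \<in> Pow {0..<n}"
    hence C: "C \<subseteq> {0..<n}" by simp
    show "{0..<n} - ({0..<n} - C) = C" using C by blast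
    show "{0..<n} - C \<in> Pow {0..<n}" by blast
    have "({0..<n} - C) \<union> {n..<n + r} = {0..<n + r} - C" using C by auto
    thus "minor_on M (({0..<n} - C) \<union> {n..<n + r}) = minor_on M ({0..<n + r} - C)" by simp
  qed auto
  also have "\<dots> = (\<Sum>C \<in> Pow {0..<n}. det (block_C X A C))"
    by (rule sum.cong[OF refl]) (use block_minor[OF X A] in \<open>auto simp: M_def\<close>)
  finally show ?thesis .
qed

theorem mainTheorem6:
  fixes X A :: "real mat" and n r :: nat
  assumes "X \<in> carrier_mat n r" and "A \<in> carrier_mat r r"
    and "transpose_mat A = - A"
    and "\<forall>v \<in> carrier_vec r. X *\<^sub>v v = 0\<^sub>v n \<longrightarrow> v = 0\<^sub>v r"
  shows "det (A + transpose_mat X * X) > 0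
    \<and> (\<forall>C. C \<subseteq> {0..<n} \<longrightarrow> pC X A C \<ge> 0)
    \<and> (\<Sum>C \<in> Pow {0..<n}. pC X A C) = 1"
proof -
  note X = assms(1) and A = assms(2) and sk = assms(3)
  let ?D = "det (A + transpose_mat X * X)"
  have nz: "?D \<noteq> 0" by (rule det_psd_nonzero[OF assms])
  have nn: "det (block_C X A C) \<ge> 0" if "C \<subseteq> {0..<n}" for C
    using block_C_props[OF X A that sk] by (intro skew_det_nonneg) auto
  have sum: "?D = (\<Sum>C \<in> Pow {0..<n}. det (block_C X A C))" by (rule sum_identity[OF X A])
  have "?D \<ge> 0" unfolding sum by (intro sum_nonneg) (use nn in auto)
  hence pos: "?D > 0" using nz by simp
  have "\<forall>C. C \<subseteq> {0..<n} \<longrightarrow> pC X A C \<ge> 0"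
    unfolding pC_def using nn pos by simp
  moreover have "(\<Sum>C \<in> Pow {0..<n}. pC X A C) = 1"
    unfolding pC_def sum_divide_distrib[symmetric] using sum[symmetric] nz by simp
  ultimately show ?thesis using pos by simp
qed


end
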